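(* Let $\mathbb{K}\in\{\mathbb{R},\mathbb{C}\}$, let $X$ be a linear space over $\mathbb{K}$, let $\phi\colon X\times X\to\mathbb{K}$ be biadditive, and let $Z_0=\{z\in X:\phi(z,z)\neq0\}$ be nonempty. Suppose there is a function $f\colon X\to\mathbb{K}$ with $f(x+y)=f(x)f(y)-\phi(x,y)$ for all $x,y\in X$. Then there is an additive functional $F\colon X\to\mathbb{K}$ with $Z_0=X\setminus\ker F$, and $\phi(x,y)\neq 0$ for all $x,y\in Z_0$.
   Context: A map $\phi\colon X\times X\to\mathbb{K}$ is biadditive if it is additive in each variable separately (no homogeneity assumed); $\ker F=\{x\in X:F(x)=0\}$. *)

theory Defs
  imports "HOL-Analysis.Analysis"
begin

definition biadditive :: "('x::ab_group_add \<Rightarrow> 'x \<Rightarrow> 'k::ab_group_add) \<Rightarrow> bool" where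
  "biadditive \<phi> \<longleftrightarrow> (\<forall>x y z. \<phi> (x + y) z = \<phi> x z + \<phi> y z) \<and>
                     (\<forall>x y z. \<phi> x (y + z) = \<phi> x y + \<phi> x z)"

definition additive_functional :: "('x::plus \<Rightarrow> 'k::plus) \<Rightarrow> bool" where
  "additive_functional F \<longleftrightarrow> (\<forall>x y. F (x + y) = F x + F y)"

definition ker :: "('x \<Rightarrow> 'k::zero) \<Rightarrow> 'x set" where
  "ker F = {x. F x = 0}"

class complex_vector = ab_group_add +
  fixes scaleC :: "complex \<Rightarrow> 'a \<Rightarrow> 'a"
  assumes scaleC_add_right: "scaleC a (x + y) = scaleC a x + scaleC a y"
    and scaleC_add_left: "scaleC (a + b) x = scaleC a x + scaleC b x"
    and scaleC_scaleC: "scaleC a (scaleC b x) = scaleC (a * b) x"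
    and scaleC_one: "scaleC 1 x = x"

end

theory Submission
  imports Defs
begin

lemma generic:
  fixes \<phi> :: "'x::ab_group_add \<Rightarrow> 'x \<Rightarrow> 'k::field" and f :: "'x \<Rightarrow> 'k"
  assumes bi: "biadditive \<phi>" and ne: "{z. \<phi> z z \<noteq> 0} \<noteq> {}"
    and fe: "\<forall>x y. f (x + y) = f x * f y - \<phi> x y"
  shows "(\<exists>F::'x \<Rightarrow> 'k. additive_functional F \<and> {z. \<phi> z z \<noteq> 0} = UNIV - ker F) \<and>
         (\<forall>x\<in>{z. \<phi> z z \<noteq> 0}. \<forall>y\<in>{z. \<phi> z z \<noteq> 0}. \<phi> x y \<noteq> 0)"
proof -
  obtain z0 where z0: "\<phi> z0 z0 \<noteq> 0" using ne by auto
  define g where "g x = 1 - f x" for x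
  have star: "\<phi> x y * g z = \<phi> y z * g x" for x y z
  proof -
    have "f ((x + y) + z) = f (x + (y + z))" by (simp add: add.assoc)
    hence "(f x * f y - \<phi> x y) * f z - \<phi> (x + y) z = f x * (f y * f z - \<phi> y z) - \<phi> x (y + z)"
      using fe by simp
    hence "(f x * f y - \<phi> x y) * f z - (\<phi> x z + \<phi> y z) = f x * (f y * f z - \<phi> y z) - (\<phi> x y + \<phi> x z)"
      using bi unfolding biadditive_def by simp
    thus ?thesis unfolding g_def by (simp add: algebra_simps)
  qed
  have gz0: "g z0 \<noteq> 0"
  proof
    assume h: "g z0 = 0"
    have "g x = 0" for x using star[of x z0 z0] h z0 by simp
    hence f1: "f x = 1" for x unfolding g_def by (metis eq_iff_diff_eq_0)
    have "f (z0+z0) = f z0 * f z0 - \<phi> z0 z0" using fe by blast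
    hence "\<phi> z0 z0 = 0" using f1 by simp
    thus False using z0 by simp
  qed
  have gx: "g x = \<phi> x z0 * g z0 / \<phi> z0 z0" for x using star[of x z0 z0] z0
    by (simp add: field_simps)
  have phi: "\<phi> x y = \<phi> x z0 * \<phi> y z0 / \<phi> z0 z0" for x y
  proof -
    have "\<phi> x y * g z0 = \<phi> y z0 * (\<phi> x z0 * g z0 / \<phi> z0 z0)" using star[of x y z0] gx[of x] by (simp only:)
    thus ?thesis using gz0 z0 by (simp add: field_simps)
  qed
  define F where "F x = \<phi> x z0" for x
  have add: "additive_functional F" using bi unfolding biadditive_def additive_functional_def F_def by simp
  have pz: "\<phi> z z \<noteq> 0 \<longleftrightarrow> F z \<noteq> 0" for z
  proof -
    have "\<phi> z z = F z * F z / \<phi> z0 z0" using phi[of z z] unfolding F_def .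
    thus ?thesis using z0 by simp
  qed
  have "{z. \<phi> z z \<noteq> 0} = UNIV - ker F"
    unfolding ker_def using pz by auto
  moreover have "\<forall>x\<in>{z. \<phi> z z \<noteq> 0}. \<forall>y\<in>{z. \<phi> z z \<noteq> 0}. \<phi> x y \<noteq> 0"
  proof (intro ballI)
    fix x y assume "x \<in> {z. \<phi> z z \<noteq> 0}" "y \<in> {z. \<phi> z z \<noteq> 0}"
    hence "F x \<noteq> 0" "F y \<noteq> 0" using pz by auto
    moreover have "\<phi> x y = F x * F y / \<phi> z0 z0" using phi[of x y] unfolding F_def .
    ultimately show "\<phi> x y \<noteq> 0" using z0 by simp
  qed
  ultimately show ?thesis using add by blast
qed

theorem mainTheorem11:
  shows "(\<forall>(\<phi>::'a::real_vector \<Rightarrow> 'a \<Rightarrow> real) (f::'a \<Rightarrow> real).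
            biadditive \<phi> \<longrightarrow> {z. \<phi> z z \<noteq> 0} \<noteq> {} \<longrightarrow>
            (\<forall>x y. f (x + y) = f x * f y - \<phi> x y) \<longrightarrow>
            (\<exists>F::'a \<Rightarrow> real. additive_functional F \<and> {z. \<phi> z z \<noteq> 0} = UNIV - ker F) \<and>
            (\<forall>x\<in>{z. \<phi> z z \<noteq> 0}. \<forall>y\<in>{z. \<phi> z z \<noteq> 0}. \<phi> x y \<noteq> 0))
       \<and> (\<forall>(\<phi>::'b::complex_vector \<Rightarrow> 'b \<Rightarrow> complex) (f::'b \<Rightarrow> complex).
            biadditive \<phi> \<longrightarrow> {z. \<phi> z z \<noteq> 0} \<noteq> {} \<longrightarrow>
            (\<forall>x y. f (x + y) = f x * f y - \<phi> x y) \<longrightarrow>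
            (\<exists>F::'b \<Rightarrow> complex. additive_functional F \<and> {z. \<phi> z z \<noteq> 0} = UNIV - ker F) \<and>
            (\<forall>x\<in>{z. \<phi> z z \<noteq> 0}. \<forall>y\<in>{z. \<phi> z z \<noteq> 0}. \<phi> x y \<noteq> 0))"
  apply (rule conjI)
   apply (intro allI impI)
   apply (rule generic; assumption)
  apply (intro allI impI)
  apply (rule generic; assumption)
  done

end
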